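(* Let $k\leqslant 2$ and let $F\subseteq S^d$ be a $k$-neighborly family which is a partition. Then $F$ is a lamination, i.e., there exists $i\in[d]$ such that every string in $F$ has symbol $0$ or $1$ (not a joker) in position $i$.
   Context: Let $S=\{0,1,\ast\}$ and let $S^d$ be the set of strings of length $d$ over $S$; the symbol $\ast$ is called a joker, and $j(x)$ denotes the number of jokers in $x\in S^d$. For $x,y\in S^d$, $d(x,y)$ is the number of positions $i\in[d]$ such that one of $x_i,y_i$ equals $0$ and the other equals $1$. A family $F\subseteq S^d$ is $k$-neighborly if $1\leqslant d(x,y)\leqslant k$ for all distinct $x,y\in F$. A $k$-neighborly family $F$ is a partition if $\sum_{x\in F}2^{j(x)}=2^d$. For $s\in S$ and $i\in[d]$, $F^{i,s}$ denotes the set of strings in $F$ having symbol $s$ at position $i$. A family $F\subseteq S^d$ is a lamination if it is a partition and $F=F^{i,0}\cup F^{i,1}$ for some $i\in[d]$. *)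

theory Defs
  imports Main
begin

datatype sym = Zero | One | Joker

definition strings :: "nat \<Rightarrow> sym list set" where
  "strings d = {x. length x = d}"

definition jokers :: "sym list \<Rightarrow> nat" where
  "jokers x = length (filter (\<lambda>s. s = Joker) x)"

definition dist :: "sym list \<Rightarrow> sym list \<Rightarrow> nat" where
  "dist x y = card {i. i < length x \<and> i < length y \<and>
      ((x ! i = Zero \<and> y ! i = One) \<or> (x ! i = One \<and> y ! i = Zero))}"

definition neighborly :: "nat \<Rightarrow> nat \<Rightarrow> sym list set \<Rightarrow> bool" where
  "neighborly k d F \<longleftrightarrow> F \<subseteq> strings d \<and>
     (\<forall>x\<in>F. \<forall>y\<in>F. x \<noteq> y \<longrightarrow> 1 \<le> dist x y \<and> dist x y \<le> k)"

definition is_partition :: "nat \<Rightarrow> nat \<Rightarrow> sym list set \<Rightarrow> bool" where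
  "is_partition k d F \<longleftrightarrow> neighborly k d F \<and> (\<Sum>x\<in>F. (2::nat) ^ jokers x) = 2 ^ d"

definition lamination :: "nat \<Rightarrow> nat \<Rightarrow> sym list set \<Rightarrow> bool" where
  "lamination k d F \<longleftrightarrow> is_partition k d F \<and>
     (\<exists>i<d. \<forall>x\<in>F. x ! i = Zero \<or> x ! i = One)"

end

theory Submission
  imports Defs
begin


definition opp :: "sym \<Rightarrow> sym \<Rightarrow> bool" where
  "opp a b \<longleftrightarrow> (a = Zero \<and> b = One) \<or> (a = One \<and> b = Zero)"

lemma dist_alt: "dist x y = card {i. i < length x \<and> i < length y \<and> opp (x!i) (y!i)}"
  by (simp add: dist_def opp_def)

lemma dist_pos: "1 \<le> dist x y \<longleftrightarrow> (\<exists>i. i < length x \<and> i < length y \<and> opp (x!i) (y!i))"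
proof -
  have f: "finite {i. i < length x \<and> i < length y \<and> opp (x!i) (y!i)}" by simp
  have "1 \<le> card {i. i < length x \<and> i < length y \<and> opp (x!i) (y!i)} \<longleftrightarrow> {i. i < length x \<and> i < length y \<and> opp (x!i) (y!i)} \<noteq> {}"
    using f by (simp add: Suc_le_eq card_gt_0_iff)
  then show ?thesis unfolding dist_alt by blast
qed

lemma dist_sym: "dist x y = dist y x"
  unfolding dist_alt by (rule arg_cong[where f=card]) (auto simp: opp_def)

fun flip :: "sym \<Rightarrow> sym" where
  "flip Zero = One" | "flip One = Zero" | "flip Joker = Joker"

fun cube :: "sym list \<Rightarrow> sym list set" where
  "cube [] = {[]}"
| "cube (a#u) = (if a = Joker then Cons Zero ` cube u \<union> Cons One ` cube u else Cons a ` cube u)"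

lemma mem_cube: "v \<in> cube u \<longleftrightarrow> length v = length u \<and>
   (\<forall>i<length u. v!i \<noteq> Joker \<and> (u!i \<noteq> Joker \<longrightarrow> v!i = u!i))"
proof (induction u arbitrary: v)
  case Nil
  then show ?case by auto
next
  case (Cons a u)
  show ?case
  proof (cases v)
    case Nil
    then show ?thesis by auto
  next
    case (Cons b w)
    have "(\<forall>i<length (a#u). v!i \<noteq> Joker \<and> ((a#u)!i \<noteq> Joker \<longrightarrow> v!i = (a#u)!i)) \<longleftrightarrow>
       (b \<noteq> Joker \<and> (a \<noteq> Joker \<longrightarrow> b = a)) \<and>
       (\<forall>i<length u. w!i \<noteq> Joker \<and> (u!i \<noteq> Joker \<longrightarrow> w!i = u!i))"
      unfolding Cons by (auto simp: less_Suc_eq_0_disj)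
    moreover have "v \<in> cube (a#u) \<longleftrightarrow> (b \<noteq> Joker \<and> (a \<noteq> Joker \<longrightarrow> b = a)) \<and> w \<in> cube u"
      unfolding Cons by (cases a; cases b) auto
    ultimately show ?thesis using Cons.IH unfolding Cons by auto
  qed
qed

lemma finite_cube: "finite (cube u)"
  by (induction u) auto

lemma jokers_Cons: "jokers (a#u) = (if a = Joker then Suc (jokers u) else jokers u)"
  by (simp add: jokers_def)

lemma card_cube: "card (cube u) = 2 ^ jokers u"
proof (induction u)
  case Nil
  then show ?case by (simp add: jokers_def)
next
  case (Cons a u)
  show ?case
  proof (cases "a = Joker")
    case True
    have "card (Cons Zero ` cube u \<union> Cons One ` cube u) = card (Cons Zero ` cube u) + card (Cons One ` cube u)"
      by (rule card_Un_disjoint) (auto simp: finite_cube)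
    also have "\<dots> = 2 * card (cube u)" by (simp add: card_image)
    finally show ?thesis using True Cons.IH by (simp add: jokers_Cons)
  next
    case False
    then show ?thesis using Cons.IH by (simp add: jokers_Cons card_image)
  qed
qed

lemma jokers_le: "jokers u \<le> length u"
  by (simp add: jokers_def)

lemma jokers_card: "jokers u = card {i. i < length u \<and> u!i = Joker}"
  by (simp add: jokers_def length_filter_conv_card)

lemma jokers_replicate: "jokers (replicate d Joker) = d"
  by (simp add: jokers_def)

lemma cube_disj: assumes "1 \<le> dist u w" shows "cube u \<inter> cube w = {}"
proof -
  obtain i where i: "i < length u" "i < length w" "opp (u!i) (w!i)" using assms dist_pos by blast
  show ?thesis
  proof (rule ccontr)
    assume "cube u \<inter> cube w \<noteq> {}"
    then obtain v where "v \<in> cube u" "v \<in> cube w" by blast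
    then have "v!i = u!i" "v!i = w!i" using i by (auto simp: mem_cube opp_def)
    then show False using i(3) by (auto simp: opp_def)
  qed
qed



abbreviation V :: "nat \<Rightarrow> sym list set" where "V d \<equiv> cube (replicate d Joker)"

lemma cube_sub: "length u = d \<Longrightarrow> cube u \<subseteq> V d"
  by (auto simp: mem_cube)

lemma cover:
  assumes "is_partition k d F" "finite F"
  shows "(\<Union>u\<in>F. cube u) = V d"
proof (rule card_subset_eq)
  show "finite (V d)" by (rule finite_cube)
  have str: "\<And>u. u \<in> F \<Longrightarrow> length u = d"
    using assms(1) by (auto simp: is_partition_def neighborly_def strings_def)
  show "(\<Union>u\<in>F. cube u) \<subseteq> V d" using cube_sub str by blast
  have dis: "\<forall>i\<in>F. \<forall>j\<in>F. i \<noteq> j \<longrightarrow> cube i \<inter> cube j = {}"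
    using assms(1) cube_disj by (auto simp: is_partition_def neighborly_def)
  have "card (\<Union>u\<in>F. cube u) = (\<Sum>u\<in>F. card (cube u))"
    by (rule card_UN_disjoint) (use assms(2) finite_cube dis in auto)
  also have "\<dots> = 2 ^ d" using assms(1) by (simp add: card_cube is_partition_def)
  also have "\<dots> = card (V d)" by (simp add: card_cube jokers_replicate)
  finally show "card (\<Union>u\<in>F. cube u) = card (V d)" .
qed

definition sg :: "nat set \<Rightarrow> sym list \<Rightarrow> int" where
  "sg S v = (-1) ^ card {i\<in>S. v!i = One}"

lemma sum_sg_zero:
  assumes "i \<in> S" "i < length u" "u!i = Joker" "finite S"
  shows "sum (sg S) (cube u) = 0"
proof -
  define g where "g v = v[i := flip (v!i)]" for v
  have gin: "g v \<in> cube u" if "v \<in> cube u" for v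
    using that assms unfolding g_def mem_cube
    by (auto simp: nth_list_update) (metis flip.simps sym.exhaust)+
  have gg: "g (g v) = v" if "v \<in> cube u" for v
  proof -
    have "v!i \<noteq> Joker" using that assms by (auto simp: mem_cube)
    then have "flip (flip (v!i)) = v!i" by (cases "v!i") auto
    moreover have "i < length v" using that assms by (auto simp: mem_cube)
    ultimately show ?thesis by (simp add: g_def)
  qed
  have neg: "sg S (g v) = - sg S v" if "v \<in> cube u" for v
  proof -
    have iv: "i < length v" "v!i \<noteq> Joker" using that assms by (auto simp: mem_cube)
    have fin: "finite {j\<in>S. v!j = One}" using assms(4) by simp
    show ?thesis
    proof (cases "v!i = One")
      case True
      then have "{j\<in>S. g v!j = One} = {j\<in>S. v!j = One} - {i}"
        using iv by (auto simp: g_def nth_list_update)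
      moreover have "i \<in> {j\<in>S. v!j = One}" using True assms by auto
      ultimately have "card {j\<in>S. v!j = One} = Suc (card {j\<in>S. g v!j = One})"
        using fin by (metis card_Suc_Diff1)
      then show ?thesis by (simp add: sg_def)
    next
      case False
      then have vz: "v!i = Zero" using iv by (cases "v!i") auto
      then have "{j\<in>S. g v!j = One} = insert i {j\<in>S. v!j = One}"
        using iv assms by (auto simp: g_def nth_list_update)
      moreover have "i \<notin> {j\<in>S. v!j = One}" using vz by auto
      ultimately have "card {j\<in>S. g v!j = One} = Suc (card {j\<in>S. v!j = One})"
        using fin by simp
      then show ?thesis by (simp add: sg_def)
    qed
  qed
  have "sum (sg S) (cube u) = sum (\<lambda>v. - sg S v) (cube u)"
    by (rule sum.reindex_bij_witness[of _ g g]) (auto simp: gin gg neg)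
  then show ?thesis by (simp add: sum_negf)
qed

lemma sum_sg_fixed:
  assumes "\<forall>j\<in>S. j < length u \<and> u!j \<noteq> Joker"
  shows "sum (sg S) (cube u) = 2 ^ jokers u * sg S u"
proof -
  have "sg S v = sg S u" if "v \<in> cube u" for v
  proof -
    have "{j\<in>S. v!j = One} = {j\<in>S. u!j = One}" using that assms by (auto simp: mem_cube)
    then show ?thesis by (simp add: sg_def)
  qed
  then have "sum (sg S) (cube u) = sum (\<lambda>_. sg S u) (cube u)" by simp
  also have "\<dots> = 2 ^ jokers u * sg S u" by (simp add: card_cube)
  finally show ?thesis .
qed



lemma cardfix: "length u = d \<Longrightarrow> card {i. i<d \<and> u!i \<noteq> Joker} + jokers u = d"
proof -
  assume l: "length u = d"
  have "{i. i<d \<and> u!i \<noteq> Joker} \<union> {i. i<d \<and> u!i = Joker} = {..<d}" by auto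
  moreover have "card ({i. i<d \<and> u!i \<noteq> Joker} \<union> {i. i<d \<and> u!i = Joker}) =
     card {i. i<d \<and> u!i \<noteq> Joker} + card {i. i<d \<and> u!i = Joker}"
    by (rule card_Un_disjoint) auto
  ultimately show ?thesis using l by (simp add: jokers_card)
qed

lemma pair:
  assumes P: "is_partition k d F" and k: "k \<le> 2" and c: "2 \<le> card F"
  shows "\<exists>y\<in>F. \<exists>i<d. y!i \<noteq> Joker \<and> y[i := flip (y!i)] \<in> F"
proof -
  have fin: "finite F" using c card.infinite by fastforce
  have str: "\<And>u. u\<in>F \<Longrightarrow> length u = d"
    using P by (auto simp: is_partition_def neighborly_def strings_def)
  have nb: "\<And>u w. u\<in>F \<Longrightarrow> w\<in>F \<Longrightarrow> u\<noteq>w \<Longrightarrow> 1 \<le> dist u w \<and> dist u w \<le> k"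
    using P by (auto simp: is_partition_def neighborly_def)
  have sumF: "(\<Sum>u\<in>F. (2::nat)^jokers u) = 2^d" using P by (simp add: is_partition_def)
  have Fne: "F \<noteq> {}" using c by auto
  have "Min (jokers ` F) \<in> jokers ` F" using fin Fne by simp
  then obtain y where y: "y\<in>F" "jokers y = Min (jokers ` F)" by (metis imageE)
  have ymin: "\<And>u. u\<in>F \<Longrightarrow> jokers y \<le> jokers u" using y fin by simp
  define fx where "fx u = {i. i<d \<and> u!i \<noteq> Joker}" for u
  define S where "S = fx y"
  have cS: "card S + jokers y = d" using cardfix[OF str[OF y(1)]] by (simp add: S_def fx_def)
  have finS: "finite S" by (simp add: S_def fx_def)
  have Sne: "S \<noteq> {}"
  proof
    assume "S = {}"
    then have jy: "jokers y = d" using cS by simp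
    have "\<And>u. u\<in>F \<Longrightarrow> jokers u = d" using ymin jy jokers_le str by (metis le_antisym)
    then have "(\<Sum>u\<in>F. (2::nat)^jokers u) = card F * 2^d" by simp
    moreover have "card F * 2^d \<ge> 2 * 2^d" using c by simp
    ultimately show False using sumF by simp
  qed
  have key: "fx u = S" if u: "u\<in>F" "S \<subseteq> fx u" for u
  proof -
    have "card (fx u) + jokers u = d" using cardfix[OF str[OF u(1)]] by (simp add: fx_def)
    then have "card (fx u) \<le> card S" using ymin[OF u(1)] cS by simp
    then show ?thesis using card_seteq[of "fx u" S] u(2) by (simp add: fx_def)
  qed
  obtain i0 where i0: "i0 \<in> S" using Sne by blast
  have i0d: "i0 < d" using i0 by (simp add: S_def fx_def)
  have "sum (sg S) (V d) = 0"
    by (rule sum_sg_zero[of i0]) (use i0 i0d finS in auto)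
  moreover have "sum (sg S) (V d) = (\<Sum>u\<in>F. sum (sg S) (cube u))"
  proof -
    have dis: "\<forall>i\<in>F. \<forall>j\<in>F. i \<noteq> j \<longrightarrow> cube i \<inter> cube j = {}"
      using nb cube_disj by blast
    have "sum (sg S) (\<Union>u\<in>F. cube u) = (\<Sum>u\<in>F. sum (sg S) (cube u))"
      by (rule sum.UNION_disjoint) (use fin finite_cube dis in auto)
    then show ?thesis using cover[OF P fin] by simp
  qed
  moreover have "(\<Sum>u\<in>F. sum (sg S) (cube u)) =
      (\<Sum>u\<in>F. if fx u = S then 2^jokers y * sg S u else 0)"
  proof (rule sum.cong)
    fix u assume u: "u \<in> F"
    show "sum (sg S) (cube u) = (if fx u = S then 2^jokers y * sg S u else 0)"
    proof (cases "fx u = S")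
      case True
      have "card (fx u) + jokers u = d" using cardfix[OF str[OF u]] by (simp add: fx_def)
      then have "jokers u = jokers y" using True cS by simp
      moreover have "\<forall>j\<in>S. j < length u \<and> u!j \<noteq> Joker" using True str u by (auto simp: fx_def)
      ultimately show ?thesis using True sum_sg_fixed by simp
    next
      case False
      then have "\<not> S \<subseteq> fx u" using key u by blast
      then obtain j where j: "j \<in> S" "j \<notin> fx u" by blast
      then have "j < length u" "u!j = Joker" using str u by (auto simp: S_def fx_def)
      then show ?thesis using False sum_sg_zero[OF j(1) _ _ finS] by simp
    qed
  qed simp
  moreover have "(\<Sum>u\<in>F. if fx u = S then 2^jokers y * sg S u else 0) =
      2^jokers y * (\<Sum>u\<in>{u\<in>F. fx u = S}. sg S u)"
    by (simp add: sum.inter_filter[OF fin] sum_distrib_left if_distrib cong: if_cong)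
  ultimately have sum0: "(\<Sum>u\<in>{u\<in>F. fx u = S}. sg S u) = 0" by simp
  obtain z where z: "z \<in> F" "fx z = S" "sg S z \<noteq> sg S y"
  proof (rule ccontr)
    assume "\<not> thesis"
    then have "\<And>u. u\<in>{u\<in>F. fx u = S} \<Longrightarrow> sg S u = sg S y" using that by blast
    then have "(\<Sum>u\<in>{u\<in>F. fx u = S}. sg S u) = of_nat (card {u\<in>F. fx u = S}) * sg S y" by simp
    moreover have "card {u\<in>F. fx u = S} \<noteq> 0" using fin y(1) by (auto simp: S_def)
    moreover have "sg S y \<noteq> 0" by (simp add: sg_def)
    ultimately show False using sum0 by simp
  qed
  have yz: "y \<noteq> z" using z by auto
  define D where "D = {i. i<d \<and> opp (y!i) (z!i)}"
  have "dist y z = card D" unfolding dist_alt D_def using str y(1) z(1) by simp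
  then have D2: "card D \<le> 2" using nb[OF y(1) z(1) yz] k by simp
  define Y where "Y = {i\<in>S. y!i = One}"
  define Z where "Z = {i\<in>S. z!i = One}"
  have symc: "\<And>a. a \<noteq> Joker \<Longrightarrow> a = Zero \<or> a = One" by (case_tac a) auto
  have DYZ: "D = (Y - Z) \<union> (Z - Y)"
  proof -
    have "i \<in> D \<longleftrightarrow> i \<in> (Y - Z) \<union> (Z - Y)" for i
    proof (cases "i \<in> S")
      case True
      then have "y!i \<noteq> Joker" "z!i \<noteq> Joker" "i < d" using z(2) by (auto simp: S_def fx_def)
      then show ?thesis unfolding D_def Y_def Z_def opp_def using True symc by auto
    next
      case False
      then have "i < d \<Longrightarrow> y!i = Joker" by (auto simp: S_def fx_def)
      then show ?thesis unfolding D_def Y_def Z_def opp_def using False by auto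
    qed
    then show ?thesis by blast
  qed
  have finY: "finite Y" "finite Z" using finS by (auto simp: Y_def Z_def)
  have cY: "card Y = card (Y - Z) + card (Y \<inter> Z)"
    using card_Un_disjoint[of "Y - Z" "Y \<inter> Z"] finY by (simp add: Un_Diff_Int) blast
  have cZ: "card Z = card (Z - Y) + card (Y \<inter> Z)"
  proof -
    have e: "Z = (Z - Y) \<union> (Y \<inter> Z)" by blast
    have "card ((Z - Y) \<union> (Y \<inter> Z)) = card (Z - Y) + card (Y \<inter> Z)"
      by (rule card_Un_disjoint) (use finY in auto)
    then show ?thesis using e by simp
  qed
  have cD: "card D = card (Y - Z) + card (Z - Y)"
    unfolding DYZ by (rule card_Un_disjoint) (use finY in auto)
  have "\<not> (even (card Y) \<longleftrightarrow> even (card Z))"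
    using z(3) unfolding sg_def Y_def Z_def by (auto simp: minus_one_power_iff split: if_splits)
  then have "odd (card D)" using cY cZ cD by auto
  then have "card D = 1" using D2 by presburger
  then obtain i where Di: "D = {i}" using card_1_singletonE by blast
  have id: "i < d" and oi: "opp (y!i) (z!i)" using Di unfolding D_def by auto
  have yi: "y!i \<noteq> Joker" using oi by (auto simp: opp_def)
  have "y[i := flip (y!i)] = z"
  proof (rule nth_equalityI)
    show "length (y[i := flip (y!i)]) = length z" using str y(1) z(1) by simp
    fix j assume j: "j < length (y[i := flip (y!i)])"
    then have jd: "j < d" using str y(1) by simp
    show "y[i := flip (y!i)] ! j = z ! j"
    proof (cases "j = i")
      case True
      then show ?thesis using oi jd str y(1) by (auto simp: opp_def)
    next
      case False
      then have nD: "j \<notin> D" using Di by auto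
      show ?thesis
      proof (cases "j \<in> S")
        case True
        then have "y!j \<noteq> Joker" "z!j \<noteq> Joker" using z(2) jd by (auto simp: S_def fx_def)
        then show ?thesis using nD jd False unfolding D_def opp_def
          by (cases "y!j"; cases "z!j") auto
      next
        case False
        then have "y!j = Joker" "z!j = Joker" using z(2) jd unfolding S_def fx_def by auto
        then show ?thesis using \<open>j \<noteq> i\<close> by simp
      qed
    qed
  qed
  then show ?thesis using y(1) z(1) id yi by auto
qed



lemma jokers_upd_J: "i < length y \<Longrightarrow> y!i \<noteq> Joker \<Longrightarrow> jokers (y[i:=Joker]) = Suc (jokers y)"
  by (induction y arbitrary: i) (auto simp: jokers_Cons split: nat.splits)

lemma jokers_upd_nJ: "i < length y \<Longrightarrow> y!i \<noteq> Joker \<Longrightarrow> a \<noteq> Joker \<Longrightarrow> jokers (y[i:=a]) = jokers y"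
  by (induction y arbitrary: i) (auto simp: jokers_Cons split: nat.splits)

lemma main:
  "\<forall>F. card F = n \<longrightarrow> is_partition k d F \<longrightarrow> k \<le> 2 \<longrightarrow> 2 \<le> card F \<longrightarrow>
     (\<exists>i<d. \<forall>x\<in>F. x!i = Zero \<or> x!i = One)"
proof (induction n rule: less_induct)
  case (less n)
  show ?case
  proof (intro allI impI)
    fix F assume cF: "card F = n" and P: "is_partition k d F" and k: "k \<le> 2" and c: "2 \<le> card F"
    have fin: "finite F" using c card.infinite by fastforce
    have str: "\<And>u. u\<in>F \<Longrightarrow> length u = d"
      using P by (auto simp: is_partition_def neighborly_def strings_def)
    have nb: "\<And>u v. u\<in>F \<Longrightarrow> v\<in>F \<Longrightarrow> u\<noteq>v \<Longrightarrow> 1 \<le> dist u v \<and> dist u v \<le> k"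
      using P by (auto simp: is_partition_def neighborly_def)
    have sumF: "(\<Sum>u\<in>F. (2::nat)^jokers u) = 2^d" using P by (simp add: is_partition_def)
    have symc: "\<And>a. a \<noteq> Joker \<Longrightarrow> a = Zero \<or> a = One" by (case_tac a) auto
    obtain y i where y: "y \<in> F" "i < d" "y!i \<noteq> Joker" "y[i := flip (y!i)] \<in> F"
      using pair[OF P k c] by blast
    define z where "z = y[i := flip (y!i)]"
    define w where "w = y[i := Joker]"
    have ly: "length y = d" using str y(1) by simp
    have fl: "flip (y!i) \<noteq> Joker" "flip (y!i) \<noteq> y!i" using y(3) by (cases "y!i"; simp)+
    have zF: "z \<in> F" using y(4) z_def by simp
    have zi: "z!i = flip (y!i)" using ly y(2) by (simp add: z_def)
    have yz: "y \<noteq> z" using zi fl(2) by auto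
    have wi: "w!i = Joker" using ly y(2) by (simp add: w_def)
    have wj: "\<And>j. j \<noteq> i \<Longrightarrow> w!j = y!j" "\<And>j. j \<noteq> i \<Longrightarrow> z!j = y!j"
      by (simp_all add: w_def z_def)
    have lw: "length w = d" "length z = d" using ly by (simp_all add: w_def z_def)
    have oppw: "j \<noteq> i \<and> opp (y!j) (u!j)" if a: "opp (w!j) (u!j)" for u j
    proof -
      have "j \<noteq> i" using a wi by (auto simp: opp_def)
      then show ?thesis using a wj(1) by simp
    qed
    have wnF: "w \<notin> F"
    proof
      assume wF: "w \<in> F"
      have "w \<noteq> y" using wi y(3) by auto
      then obtain j where "j < length w" "j < length y" "opp (w!j) (y!j)"
        using nb[OF wF y(1)] dist_pos by blast
      then show False using oppw[where u=y and j=j] by (auto simp: opp_def)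
    qed
    define F' where "F' = insert w (F - {y, z})"
    have finF': "finite F'" using fin by (simp add: F'_def)
    have cF': "card F' = card F - 1"
    proof -
      have "card (F - {y,z}) = card F - 2" using fin y(1) zF yz by (simp add: card_Diff_subset)
      then show ?thesis using wnF fin c by (simp add: F'_def)
    qed
    have jw: "jokers w = Suc (jokers y)" using jokers_upd_J ly y(2,3) by (simp add: w_def)
    have jz: "jokers z = jokers y" using jokers_upd_nJ ly y(2,3) fl by (simp add: z_def)
    have sumF': "(\<Sum>u\<in>F'. (2::nat)^jokers u) = 2^d"
    proof -
      have "(\<Sum>u\<in>F. (2::nat)^jokers u) = 2^jokers y + (\<Sum>u\<in>F - {y}. (2::nat)^jokers u)"
        using sum.remove[OF fin y(1)] by simp
      also have "(\<Sum>u\<in>F - {y}. (2::nat)^jokers u) = 2^jokers z + (\<Sum>u\<in>F - {y} - {z}. (2::nat)^jokers u)"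
        using sum.remove[of "F - {y}" z] fin zF yz by simp
      finally have "2^d = 2^jokers y + 2^jokers z + (\<Sum>u\<in>F - {y,z}. (2::nat)^jokers u)"
        using sumF by (simp add: Diff_insert2[symmetric] insert_commute)
      moreover have "(\<Sum>u\<in>F'. (2::nat)^jokers u) = 2^jokers w + (\<Sum>u\<in>F - {y,z}. (2::nat)^jokers u)"
        unfolding F'_def using wnF fin by simp
      ultimately show ?thesis using jw jz by simp
    qed
    have dwu: "1 \<le> dist w u \<and> dist w u \<le> k" if u: "u \<in> F - {y, z}" for u
    proof -
      have uF: "u \<in> F" and uy: "u \<noteq> y" and uz: "u \<noteq> z" using u by auto
      have lu: "length u = d" using str uF by simp
      have "dist w u \<le> dist y u"
        unfolding dist_alt
      proof (rule card_mono)
        show "finite {i. i < length y \<and> i < length u \<and> opp (y ! i) (u ! i)}" by simp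
        show "{i. i < length w \<and> i < length u \<and> opp (w ! i) (u ! i)} \<subseteq> {i. i < length y \<and> i < length u \<and> opp (y ! i) (u ! i)}"
        proof
          fix j assume "j \<in> {i. i < length w \<and> i < length u \<and> opp (w ! i) (u ! i)}"
          then have "j < length w" "j < length u" "opp (w ! j) (u ! j)" by auto
          then show "j \<in> {i. i < length y \<and> i < length u \<and> opp (y ! i) (u ! i)}"
            using oppw[where u=u and j=j] lw ly by simp
        qed
      qed
      moreover have "1 \<le> dist w u"
      proof -
        have "1 \<le> dist y u" using nb[OF y(1) uF uy[symmetric]] by simp
        then obtain j where j: "j < length y" "opp (y!j) (u!j)" unfolding dist_pos by blast
        show ?thesis
        proof (cases "j = i")
          case False
          then have "opp (w!j) (u!j)" using j wj(1)[OF False] by simp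
          then show ?thesis using dist_pos[of w u] lw lu ly j(1) by auto
        next
          case True
          have "1 \<le> dist z u" using nb[OF zF uF uz[symmetric]] by simp
          then obtain j' where j': "j' < length z" "opp (z!j') (u!j')" unfolding dist_pos by blast
          have "j' \<noteq> i"
          proof
            assume "j' = i"
            then show False using j' j True zi y(3) by (cases "y!i"; cases "u!i") (auto simp: opp_def)
          qed
          then have "opp (w!j') (u!j')" using j' wj by simp
          then show ?thesis using dist_pos[of w u] lw lu j'(1) by auto
        qed
      qed
      ultimately show ?thesis using nb[OF y(1) uF uy[symmetric]] by simp
    qed
    have P': "is_partition k d F'"
      unfolding is_partition_def neighborly_def
    proof (intro conjI ballI impI)
      show "F' \<subseteq> strings d" using str lw by (auto simp: F'_def strings_def)
      show "(\<Sum>u\<in>F'. (2::nat) ^ jokers u) = 2 ^ d" by (rule sumF')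
    next
      fix a b assume ab: "a \<in> F'" "b \<in> F'" "a \<noteq> b"
      have "1 \<le> dist a b \<and> dist a b \<le> k"
      proof -
        consider "a = w" "b \<in> F - {y,z}" | "b = w" "a \<in> F - {y,z}" | "a \<in> F" "b \<in> F"
          using ab unfolding F'_def by blast
        then show ?thesis
        proof cases
          case 1 then show ?thesis using dwu[OF 1(2)] by simp
        next
          case 2 then show ?thesis using dwu[OF 2(2)] dist_sym[of a b] by simp
        next
          case 3 then show ?thesis using nb[OF 3 ab(3)] by blast
        qed
      qed
      then show "1 \<le> dist a b" "dist a b \<le> k" by simp_all
    qed
    show "\<exists>i<d. \<forall>x\<in>F. x!i = Zero \<or> x!i = One"
    proof (cases "2 \<le> card F'")
      case True
      have "card F' < n" using cF' cF c by simp
      then obtain j where j: "j < d" "\<forall>x\<in>F'. x!j = Zero \<or> x!j = One"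
        using less.IH P' k True by blast
      have wF': "w \<in> F'" by (simp add: F'_def)
      have "\<forall>x\<in>F. x!j = Zero \<or> x!j = One"
      proof
        fix x assume xF: "x \<in> F"
        show "x!j = Zero \<or> x!j = One"
        proof (cases "x = y \<or> x = z")
          case True
          show ?thesis
          proof (cases "j = i")
            case True
            have "x!i \<noteq> Joker" using \<open>x = y \<or> x = z\<close> zi y(3) fl(1) by auto
            then show ?thesis using True symc by blast
          next
            case False
            have "x!j = w!j" using \<open>x = y \<or> x = z\<close> wj False by auto
            then show ?thesis using j(2) wF' by simp
          qed
        next
          case False
          then show ?thesis using xF j(2) by (auto simp: F'_def)
        qed
      qed
      then show ?thesis using j(1) by blast
    next
      case False
      have "F' = {w}"
      proof -
        have "card F' \<le> 1" using False by simp
        then have "\<forall>a\<in>F'. \<forall>b\<in>F'. a = b" using card_le_Suc0_iff_eq[OF finF'] by simp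
        moreover have "w \<in> F'" by (simp add: F'_def)
        ultimately show ?thesis by blast
      qed
      then have "F - {y,z} \<subseteq> {w}" unfolding F'_def by blast
      then have "F - {y,z} = {}" using wnF by blast
      then have "F \<subseteq> {y, z}" by blast
      moreover have "y!i = Zero \<or> y!i = One" "z!i = Zero \<or> z!i = One" using zi y(3) fl(1) symc by (metis, metis)
      ultimately have "\<forall>x\<in>F. x!i = Zero \<or> x!i = One" by blast
      then show ?thesis using y(2) by blast
    qed
  qed
qed


theorem proposition4:
  fixes k d :: nat and F :: "sym list set"
  assumes "1 \<le> k" and "k \<le> 2"
    and "is_partition k d F"
    and "card F \<ge> 2"
  shows "lamination k d F"
  using main[of "card F" k d] assms unfolding lamination_def by blast

end
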